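(* Let $p/q$ be a rational number. For real $\varepsilon\neq0$ small, let $z_\varepsilon$ be a point of $\mathcal C_{p/q}(p/q+\varepsilon)$ and $Q_\varepsilon(w)=\frac{1}{z_\varepsilon}P_{p/q+\varepsilon}(z_\varepsilon w)$. Then $$Q_\varepsilon^{\circ q}(w)=w+2i\pi q\varepsilon\, w(1-w^q)+\varepsilon R_\varepsilon(w),$$ where $R_\varepsilon\to0$ uniformly on compact subsets of $\mathbb C$ as $\varepsilon\to0$.
   Context: $P_\alpha(z)=e^{2i\pi\alpha}z+z^2$. The cycle $\mathcal C_{p/q}(\alpha)$: with $\zeta=e^{2i\pi p/q}$ there is an analytic $\chi_{p/q}:B(0,q^{-3/q})\to\mathbb C$, $\chi_{p/q}(0)=0$, such that for $\delta\ne0$, $\chi_{p/q}(\delta)\neq0$ and $\{\chi_{p/q}(\zeta^k\delta)\}_{0\le k<q}$ is a cycle of period $q$ of $P_{p/q+\delta^q}$; $\mathcal C_{p/q}(\alpha)=\chi_{p/q}(\{\delta:\delta^q=\alpha-p/q\})$ for $|\alpha-p/q|<1/q^3$. *)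

theory Defs
  imports "HOL-Analysis.Analysis"
begin

definition Pol :: "complex \<Rightarrow> complex \<Rightarrow> complex" where
  "Pol \<alpha> z = exp (2 * pi * \<i> * \<alpha>) * z + z ^ 2"

definition is_cycle :: "(complex \<Rightarrow> complex) \<Rightarrow> nat \<Rightarrow> complex set \<Rightarrow> bool" where
  "is_cycle f n S \<longleftrightarrow> (\<exists>z. S = {(f ^^ j) z | j. j < n} \<and> (f ^^ n) z = z \<and> card S = n)"

text \<open>The properties of the parametrization chi_{p/q} from the paper.\<close>
definition chi_admissible :: "int \<Rightarrow> nat \<Rightarrow> (complex \<Rightarrow> complex) \<Rightarrow> bool" where
  "chi_admissible p q chi \<longleftrightarrow>
     (let r = real q powr (- 3 / real q); \<zeta> = exp (2 * pi * \<i> * (of_int p / of_nat q)) in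
      chi analytic_on ball 0 r \<and> chi 0 = 0 \<and>
      (\<forall>\<delta>\<in>ball 0 r. \<delta> \<noteq> 0 \<longrightarrow>
          chi \<delta> \<noteq> 0 \<and>
          is_cycle (Pol (of_int p / of_nat q + \<delta> ^ q)) q {chi (\<zeta> ^ k * \<delta>) | k. k < q}))"

definition cyc :: "int \<Rightarrow> nat \<Rightarrow> (complex \<Rightarrow> complex) \<Rightarrow> complex \<Rightarrow> complex set" where
  "cyc p q chi \<alpha> = chi ` {\<delta>. \<delta> ^ q = \<alpha> - of_int p / of_nat q}"

end

theory Submission
  imports Defs "HOL-Computational_Algebra.Polynomial"
begin

fun GG :: "nat \<Rightarrow> complex \<Rightarrow> complex \<Rightarrow> complex" where
  "GG 0 l u = 0"
| "GG (Suc n) l u = l * GG n l u + (l ^ n + u * GG n l u) ^ 2"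

lemma iter_GG: "((\<lambda>u. l * u + u ^ 2) ^^ n) u = l ^ n * u + u ^ 2 * GG n l u"
proof (induction n)
  case 0 then show ?case by simp
next
  case (Suc n)
  show ?case by (simp add: Suc) algebra
qed

fun SS :: "nat \<Rightarrow> complex \<Rightarrow> complex \<Rightarrow> complex" where
  "SS 0 l m = 0"
| "SS (Suc n) l m = l ^ n + m * SS n l m"

lemma SS_eq: "l ^ n - m ^ n = (l - m) * SS n l m"
proof (induction n)
  case 0 then show ?case by simp
next
  case (Suc n)
  have "l ^ Suc n - m ^ Suc n = (l - m) * l ^ n + m * (l ^ n - m ^ n)" by (simp add: algebra_simps)
  then show ?case by (simp add: Suc algebra_simps)
qed

fun KK :: "nat \<Rightarrow> complex \<Rightarrow> complex \<Rightarrow> complex \<Rightarrow> complex" where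
  "KK 0 l m u = 0"
| "KK (Suc n) l m u = GG n l u + m * KK n l m u
     + (SS n l m + u * KK n l m u) * (l ^ n + m ^ n + u * (GG n l u + GG n m u))"

lemma KK_eq: "GG n l u - GG n m u = (l - m) * KK n l m u"
proof (induction n)
  case 0 then show ?case by simp
next
  case (Suc n)
  have "GG (Suc n) l u - GG (Suc n) m u = (l - m) * GG n l u + m * (GG n l u - GG n m u)
     + ((l ^ n - m ^ n) + u * (GG n l u - GG n m u)) * (l ^ n + m ^ n + u * (GG n l u + GG n m u))"
    by simp algebra
  also have "\<dots> = (l - m) * KK (Suc n) l m u"
    unfolding Suc SS_eq by simp algebra
  finally show ?case .
qed

lemma cont_GG: "continuous_on UNIV (\<lambda>x. GG n (f x) (g x))" if "continuous_on UNIV f" "continuous_on UNIV g"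
  using that by (induction n) (auto intro!: continuous_intros)

lemma cont_SS: "continuous_on UNIV (\<lambda>x. SS n (f x) m)" if "continuous_on UNIV f"
  using that by (induction n) (auto intro!: continuous_intros)

lemma cont_KK: "continuous_on UNIV (\<lambda>x. KK n (f x) m (g x))" if "continuous_on UNIV f" "continuous_on UNIV g"
  using that by (induction n) (auto intro!: continuous_intros cont_GG cont_SS)

lemma KK_bounded: "\<exists>M. \<forall>l u. norm l \<le> 1 \<longrightarrow> norm u \<le> 1 \<longrightarrow> norm (KK n l m u) \<le> M"
proof -
  have c: "continuous_on UNIV (\<lambda>x. KK n (fst x) m (snd x))"
    by (intro cont_KK continuous_intros)
  have "compact ((\<lambda>x. KK n (fst x) m (snd x)) ` (cball 0 1 \<times> cball 0 1))"
    by (intro compact_continuous_image continuous_on_subset[OF c] compact_Times) auto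
  then obtain M where "\<forall>y\<in>(\<lambda>x. KK n (fst x) m (snd x)) ` (cball 0 1 \<times> cball 0 1). norm y \<le> M"
    using compact_imp_bounded bounded_iff by metis
  then show ?thesis by force
qed

fun Fp :: "nat \<Rightarrow> complex \<Rightarrow> complex poly" where
  "Fp 0 l = [:0, 1:]"
| "Fp (Suc n) l = pcompose [:0, l, 1:] (Fp n l)"

lemma poly_Fp: "poly (Fp n l) u = ((\<lambda>u. l * u + u ^ 2) ^^ n) u"
  by (induction n) (auto simp: poly_pcompose power2_eq_square algebra_simps)

lemma cont_eq0:
  fixes A B :: "complex \<Rightarrow> complex"
  assumes "continuous_on UNIV A" "continuous_on UNIV B" "\<And>u. u \<noteq> 0 \<Longrightarrow> A u = B u"
  shows "A 0 = B 0"
proof -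
  have "(A \<longlongrightarrow> A 0) (at 0)" "(B \<longlongrightarrow> B 0) (at 0)"
    using assms(1,2) by (auto simp: continuous_on_eq_continuous_at isContD)
  moreover have "eventually (\<lambda>u. A u = B u) (at 0)"
    using assms(3) by (auto simp: eventually_at_filter)
  ultimately have "(B \<longlongrightarrow> A 0) (at 0)" using tendsto_cong by fastforce
  then show ?thesis using \<open>(B \<longlongrightarrow> B 0) (at 0)\<close> tendsto_unique[OF at_neq_bot] by blast
qed

lemma cont_poly [continuous_intros]:
  "continuous_on S f \<Longrightarrow> continuous_on S (\<lambda>x. poly (h :: complex poly) (f x))"
  unfolding poly_altdef by (intro continuous_intros)

lemma zeta_root:
  fixes p :: int and q :: nat
  assumes "q > 0" "coprime p (int q)" "exp (2 * pi * \<i> * (of_int p / of_nat q)) ^ m = 1"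
  shows "q dvd m"
proof -
  have "exp (of_nat m * (2 * pi * \<i> * (of_int p / of_nat q))) = 1"
    using assms(3) by (simp only: exp_of_nat_mult)
  then obtain n :: int where n: "Im (of_nat m * (2 * pi * \<i> * (of_int p / of_nat q))) = of_int (2 * n) * pi"
    unfolding exp_eq_1 by blast
  have "real m * (2 * pi * (real_of_int p / real q)) = of_int (2 * n) * pi" using n by simp
  then have "(2 * pi) * (real m * real_of_int p / real q) = (2 * pi) * of_int n" by (simp add: algebra_simps)
  then have "real m * real_of_int p / real q = of_int n" using mult_left_cancel[of "2 * pi" "real m * real_of_int p / real q" "of_int n"] by simp
  then have "real m * real_of_int p = of_int n * real q" using assms(1) by (simp add: field_simps)
  then have "int m * p = n * int q" by (metis of_int_eq_iff of_int_mult of_int_of_nat_eq)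
  then have "int q dvd int m * p" by simp
  then have "int q dvd int m" using assms(2)
    by (metis coprime_commute coprime_dvd_mult_left_iff)
  then show ?thesis by simp
qed

lemma zeta_pow_q:
  fixes p :: int and q :: nat
  assumes "q > 0"
  shows "exp (2 * pi * \<i> * (of_int p / of_nat q)) ^ q = 1"
proof -
  have "exp (2 * pi * \<i> * (of_int p / of_nat q)) ^ q = exp (of_nat q * (2 * pi * \<i> * (of_int p / of_nat q)))"
    by (rule exp_of_nat_mult[symmetric])
  also have "of_nat q * (2 * pi * \<i> * (of_int p / of_nat q)) = (2 * of_int p * pi) * \<i>"
    using assms by (simp add: field_simps)
  also have "exp \<dots> = 1" by (rule exp_integer_2pi) simp
  finally show ?thesis .
qed

lemma parabolic:
  fixes p :: int and q :: nat
  assumes q0: "q > 0" and cop: "coprime p (int q)"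
  defines "\<zeta> \<equiv> exp (2 * pi * \<i> * (of_int p / of_nat q))"
  shows "\<exists>H. continuous_on UNIV H \<and> (\<forall>u. ((\<lambda>u. \<zeta> * u + u ^ 2) ^^ q) u - u = u ^ (q + 1) * H u)"
proof -
  define f where "f = (\<lambda>u. \<zeta> * u + u ^ 2)"
  define F where "F = f ^^ q"
  have zq: "\<zeta> ^ q = 1" unfolding \<zeta>_def by (rule zeta_pow_q[OF q0])
  have z0: "\<zeta> \<noteq> 0" unfolding \<zeta>_def by simp
  have FG: "F u - u = u ^ 2 * GG q \<zeta> u" for u
    unfolding F_def f_def iter_GG zq by simp
  define g where "g = Fp q \<zeta> - [:0, 1:]"
  have pg: "poly g u = F u - u" for u
    unfolding g_def F_def f_def by (simp add: poly_Fp)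
  show ?thesis
  proof (cases "g = 0")
    case True
    then show ?thesis unfolding f_def[symmetric] F_def[symmetric]
      by (intro exI[of _ "\<lambda>_. 0"]) (auto simp: pg[symmetric])
  next
    case False
    obtain h where gh: "g = [:0, 1:] ^ order 0 g * h" and hnd: "\<not> [:0, 1:] dvd h"
      using order_decomp[OF False, of 0] by auto
    define k where "k = order 0 g"
    have h0: "poly h 0 \<noteq> 0" using hnd by (simp add: poly_eq_0_iff_dvd)
    have E1: "F u - u = u ^ k * poly h u" for u
      using arg_cong[OF gh, of "\<lambda>p. poly p u"] by (simp add: pg k_def poly_power)
    have k2: "k \<ge> 2"
    proof (rule ccontr)
      assume "\<not> k \<ge> 2"
      then consider "k = 0" | "k = 1" by linarith
      then show False
      proof cases
        case 1
        then show False using E1[of 0] FG[of 0] h0 by simp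
      next
        case 2
        have "poly h 0 = 0 * GG q \<zeta> 0"
        proof (rule cont_eq0[of "poly h" "\<lambda>u. u * GG q \<zeta> u"])
          show "continuous_on UNIV (poly h)" using cont_poly[of UNIV "\<lambda>x. x" h] by (simp add: continuous_on_id)
          show "continuous_on UNIV (\<lambda>u. u * GG q \<zeta> u)"
            by (intro continuous_intros cont_GG)
          fix u :: complex assume "u \<noteq> 0"
          then show "poly h u = u * GG q \<zeta> u"
            using E1[of u] FG[of u] 2 by (simp add: power2_eq_square)
        qed
        then show False using h0 by simp
      qed
    qed
    have comm: "F (f u) = f (F u)" for u unfolding F_def by (simp add: funpow_swap1)
    have key: "u ^ k * ((\<zeta> + u) ^ k * poly h (\<zeta> * u + u ^ 2)) = u ^ k * (poly h u * (\<zeta> + 2 * u + u ^ k * poly h u))" for u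
    proof -
      have a: "F (f u) - f u = (f u) ^ k * poly h (f u)" by (rule E1)
      have b: "F u = u + u ^ k * poly h u" using E1[of u] by (simp add: algebra_simps)
      have "f u = u * (\<zeta> + u)" unfolding f_def by (simp add: power2_eq_square algebra_simps)
      then have "(f u) ^ k = u ^ k * (\<zeta> + u) ^ k" by (simp add: power_mult_distrib)
      moreover have "F (f u) - f u = f (F u) - f u" using comm by simp
      moreover have "f (F u) - f u = u ^ k * (poly h u * (\<zeta> + 2 * u + u ^ k * poly h u))"
        unfolding b f_def by (simp add: power2_eq_square algebra_simps)
      ultimately show ?thesis using a unfolding f_def by (simp add: algebra_simps)
    qed
    have "(\<zeta> + 0) ^ k * poly h (\<zeta> * 0 + 0 ^ 2) = poly h 0 * (\<zeta> + 2 * 0 + 0 ^ k * poly h 0)"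
    proof (rule cont_eq0[of "\<lambda>u. (\<zeta> + u) ^ k * poly h (\<zeta> * u + u ^ 2)" "\<lambda>u. poly h u * (\<zeta> + 2 * u + u ^ k * poly h u)"])
      show "continuous_on UNIV (\<lambda>u. (\<zeta> + u) ^ k * poly h (\<zeta> * u + u ^ 2))"
        by (intro continuous_intros)
      show "continuous_on UNIV (\<lambda>u. poly h u * (\<zeta> + 2 * u + u ^ k * poly h u))"
        by (intro continuous_intros)
      fix u :: complex assume "u \<noteq> 0"
      then show "(\<zeta> + u) ^ k * poly h (\<zeta> * u + u ^ 2) = poly h u * (\<zeta> + 2 * u + u ^ k * poly h u)"
        using key[of u] by simp
    qed
    moreover have "(0::complex) ^ k = 0" using k2 by simp
    ultimately have "\<zeta> ^ k * poly h 0 = poly h 0 * \<zeta>" by simp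
    then have "\<zeta> ^ k = \<zeta>" using h0 by simp
    moreover obtain j where kj: "k = Suc j" using k2 by (cases k) auto
    ultimately have "\<zeta> * \<zeta> ^ (k - 1) = \<zeta> * 1" by simp
    then have "\<zeta> ^ (k - 1) = 1" using z0 by simp
    then have "q dvd k - 1" using zeta_root[OF q0 cop] unfolding \<zeta>_def by blast
    then have "q \<le> k - 1" using k2 by (intro dvd_imp_le) auto
    then have kq: "k = (q + 1) + (k - q - 1)" using q0 by arith
    show ?thesis
    proof (intro exI[of _ "\<lambda>u. u ^ (k - q - 1) * poly h u"] conjI allI)
      show "continuous_on UNIV (\<lambda>u. u ^ (k - q - 1) * poly h u)" by (intro continuous_intros)
      fix u :: complex
      have "((\<lambda>u. \<zeta> * u + u ^ 2) ^^ q) u - u = u ^ k * poly h u"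
        using E1 unfolding F_def f_def .
      also have "\<dots> = u ^ (q + 1) * (u ^ (k - q - 1) * poly h u)"
        by (subst kq, subst power_add) simp
      finally show "((\<lambda>u. \<zeta> * u + u ^ 2) ^^ q) u - u = u ^ (q + 1) * (u ^ (k - q - 1) * poly h u)" .
    qed
  qed
qed

lemma conj_iter:
  fixes f :: "complex \<Rightarrow> complex"
  assumes "z \<noteq> 0"
  shows "((\<lambda>u. f (z * u) / z) ^^ n) w = (f ^^ n) (z * w) / z"
  using assms by (induction n) auto

lemma exp_small:
  assumes "\<eta> > 0"
  shows "\<exists>d>0. \<forall>h::complex. norm h < d \<longrightarrow> norm (exp h - 1 - h) \<le> \<eta> * norm h"
proof -
  have "(\<lambda>h. (exp (0 + h) - exp 0) / h) \<midarrow>(0::complex)\<rightarrow> exp 0"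
    by (intro DERIV_D DERIV_exp)
  then have "(\<lambda>h. (exp h - 1) / h) \<midarrow>(0::complex)\<rightarrow> 1" by simp
  then have "\<exists>s>0. \<forall>x::complex. x \<noteq> 0 \<and> norm (x - 0) < s \<longrightarrow> norm ((exp x - 1) / x - 1) < \<eta>"
    by (rule LIM_D) (rule assms)
  then obtain s where s1: "s > 0" and
    s2: "\<forall>x::complex. x \<noteq> 0 \<and> norm (x - 0) < s \<longrightarrow> norm ((exp x - 1) / x - 1) < \<eta>" by (elim exE conjE)
  have bound: "norm (exp h - 1 - h) \<le> \<eta> * norm h" if h: "norm h < s" for h :: complex
  proof (cases "h = 0")
    case False
    have "exp h - 1 - h = h * ((exp h - 1) / h - 1)" using False by (simp add: field_simps)
    then have "norm (exp h - 1 - h) = norm h * norm ((exp h - 1) / h - 1)" by (simp add: norm_mult)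
    also have "\<dots> \<le> norm h * \<eta>" using s2 False h by (intro mult_left_mono) auto
    finally show ?thesis by (simp add: mult.commute)
  qed simp
  show ?thesis using s1 bound by blast
qed

lemma chi_lin:
  fixes chi :: "complex \<Rightarrow> complex"
  assumes "chi field_differentiable (at 0)" "chi 0 = 0"
  shows "\<exists>C d. C > 0 \<and> d > 0 \<and> (\<forall>\<delta>. norm \<delta> < d \<longrightarrow> norm (chi \<delta>) \<le> C * norm \<delta>)"
proof -
  obtain D where "(chi has_field_derivative D) (at 0)"
    using assms(1) unfolding field_differentiable_def by blast
  then have "(\<lambda>h. (chi (0 + h) - chi 0) / h) \<midarrow>0\<rightarrow> D" by (rule DERIV_D)
  then have "(\<lambda>h. chi h / h) \<midarrow>0\<rightarrow> D" using assms(2) by simp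
  then have "\<exists>s>0. \<forall>x::complex. x \<noteq> 0 \<and> norm (x - 0) < s \<longrightarrow> norm (chi x / x - D) < 1"
    by (rule LIM_D) simp
  then obtain s where s1: "s > 0" and
    s2: "\<forall>x::complex. x \<noteq> 0 \<and> norm (x - 0) < s \<longrightarrow> norm (chi x / x - D) < 1" by (elim exE conjE)
  have bound: "norm (chi h) \<le> (norm D + 1) * norm h" if h: "norm h < s" for h
  proof (cases "h = 0")
    case False
    have "norm (chi h / h) \<le> norm D + norm (chi h / h - D)"
      by (metis add.commute diff_add_cancel norm_triangle_ineq)
    also have "\<dots> \<le> norm D + 1" using s2 h False by auto
    finally have "norm (chi h) / norm h \<le> norm D + 1" by (simp add: norm_divide)
    then show ?thesis using False by (simp add: field_simps)
  qed (simp add: assms(2))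
  have "norm D + 1 > 0" using norm_ge_zero[of D] by linarith
  then show ?thesis using s1 bound by blast
qed

lemma cycle_fixed:
  assumes "is_cycle f n S" "x \<in> S"
  shows "(f ^^ n) x = x"
proof -
  obtain z where S: "S = {(f ^^ j) z | j. j < n}" and fz: "(f ^^ n) z = z"
    using assms(1) unfolding is_cycle_def by blast
  then obtain j where x: "x = (f ^^ j) z" using assms(2) by blast
  have "(f ^^ n) x = (f ^^ (n + j)) z" unfolding x by (simp add: funpow_add)
  also have "\<dots> = (f ^^ j) ((f ^^ n) z)" by (simp add: funpow_add add.commute)
  finally show ?thesis using fz x by simp
qed

lemma alg_id:
  fixes z w a c d hzw hz kzw kz Fzw Zq Wq :: complex
  assumes z: "z \<noteq> 0"
    and F1: "Fzw = a * (z * w) + z * Zq * (w * Wq) * hzw + d * (z ^ 2 * w ^ 2) * kzw"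
    and F2: "z = a * z + z * Zq * hz + d * z ^ 2 * kz"
  shows "Fzw / z - w - c * w * (1 - Wq) = (a - 1 - c) * (w - w * Wq) + w * Wq * Zq * (hzw - hz)
            + d * z * (w ^ 2 * kzw - w * Wq * kz)"
proof -
  have "z * (a + Zq * hz + d * z * kz - 1) = a * z + z * Zq * hz + d * z ^ 2 * kz - z"
    by (simp add: algebra_simps power2_eq_square)
  also have "\<dots> = 0" using F2 by simp
  finally have E: "a + Zq * hz + d * z * kz - 1 = 0" using z by simp
  have "Fzw = z * (a * w + Zq * (w * Wq) * hzw + d * z * w ^ 2 * kzw)"
    unfolding F1 by (simp add: algebra_simps power2_eq_square)
  then have Fd: "Fzw / z = a * w + Zq * (w * Wq) * hzw + d * z * w ^ 2 * kzw"
    using z by simp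
  have "(a * w + Zq * (w * Wq) * hzw + d * z * w ^ 2 * kzw) - w - c * w * (1 - Wq)
     = (a - 1 - c) * (w - w * Wq) + w * Wq * Zq * (hzw - hz) + d * z * (w ^ 2 * kzw - w * Wq * kz)
       + w * Wq * (a + Zq * hz + d * z * kz - 1)"
    by (simp add: algebra_simps power2_eq_square)
  then show ?thesis unfolding Fd E by simp
qed

lemma norm_bound:
  fixes w z a c d Zq hzw hz kzw kz :: complex and \<epsilon> R \<alpha> C1 \<beta> M \<rho> :: real and q :: nat
  assumes w: "norm w \<le> R" and R: "R \<ge> 1" and q: "q \<ge> 1" and e0: "\<epsilon> \<noteq> 0"
    and A: "norm (a - 1 - c) \<le> \<alpha> * \<bar>\<epsilon>\<bar>" and Z: "norm Zq \<le> C1 * \<bar>\<epsilon>\<bar>"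
    and B: "norm (hzw - hz) \<le> \<beta>" and D: "norm d \<le> 2 * pi * \<bar>\<epsilon>\<bar>"
    and K1: "norm kzw \<le> M" and K2: "norm kz \<le> M" and zr: "norm z \<le> \<rho>"
    and pos: "\<alpha> \<ge> 0" "C1 \<ge> 0" "M \<ge> 0"
  shows "norm (((a - 1 - c) * (w - w * w ^ q) + w * w ^ q * Zq * (hzw - hz)
            + d * z * (w ^ 2 * kzw - w * w ^ q * kz)) / of_real \<epsilon>)
         \<le> \<alpha> * (2 * R ^ (q + 1)) + R ^ (q + 1) * C1 * \<beta> + 2 * pi * \<rho> * (2 * R ^ (q + 1) * M)"
proof -
  define P where "P = R ^ (q + 1)"
  have e: "\<bar>\<epsilon>\<bar> > 0" using e0 by simp
  have nw: "norm w \<ge> 0" by simp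
  have RP: "R \<le> P" unfolding P_def using R by (metis le_add2 power_increasing power_one_right)
  have R2P: "R ^ 2 \<le> P" unfolding P_def using R q by (intro power_increasing) auto
  have wq: "norm (w * w ^ q) \<le> P" unfolding P_def
    by (metis Suc_eq_plus1 norm_power power_Suc power_mono nw w)
  have wq': "norm w * norm (w ^ q) \<le> P" using wq by (simp add: norm_mult)
  have P0: "P \<ge> 0" unfolding P_def using R by simp
  have w2: "norm (w ^ 2) \<le> P" using R2P power_mono[OF w nw, of 2] by (simp add: norm_power)
  have t1: "norm ((a - 1 - c) * (w - w * w ^ q)) \<le> (\<alpha> * \<bar>\<epsilon>\<bar>) * (2 * P)"
  proof -
    have "norm (w - w * w ^ q) \<le> norm w + norm (w * w ^ q)" by (rule norm_triangle_ineq4)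
    also have "\<dots> \<le> 2 * P" using w wq RP by linarith
    finally show ?thesis unfolding norm_mult using A pos by (intro mult_mono) auto
  qed
  have t2: "norm (w * w ^ q * Zq * (hzw - hz)) \<le> P * (C1 * \<bar>\<epsilon>\<bar>) * \<beta>"
    unfolding norm_mult using wq' Z B pos P0 e by (intro mult_mono mult_nonneg_nonneg) auto
  have t3: "norm (d * z * (w ^ 2 * kzw - w * w ^ q * kz)) \<le> (2 * pi * \<bar>\<epsilon>\<bar>) * \<rho> * (2 * P * M)"
  proof -
    have "norm (w ^ 2 * kzw - w * w ^ q * kz) \<le> norm (w ^ 2 * kzw) + norm (w * w ^ q * kz)"
      by (rule norm_triangle_ineq4)
    also have "\<dots> \<le> P * M + P * M" unfolding norm_mult
      using w2 wq' K1 K2 pos P0 by (intro add_mono mult_mono) auto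
    also have "P * M + P * M = 2 * P * M" by simp
    finally have "norm (w ^ 2 * kzw - w * w ^ q * kz) \<le> 2 * P * M" by simp
    moreover have "\<rho> \<ge> 0" using zr norm_ge_zero[of z] by linarith
    ultimately show ?thesis unfolding norm_mult using D zr by (intro mult_mono) auto
  qed
  have "norm ((a - 1 - c) * (w - w * w ^ q) + w * w ^ q * Zq * (hzw - hz)
            + d * z * (w ^ 2 * kzw - w * w ^ q * kz))
        \<le> (\<alpha> * \<bar>\<epsilon>\<bar>) * (2 * P) + P * (C1 * \<bar>\<epsilon>\<bar>) * \<beta> + (2 * pi * \<bar>\<epsilon>\<bar>) * \<rho> * (2 * P * M)"
    using t1 t2 t3 norm_triangle_ineq[of "(a - 1 - c) * (w - w * w ^ q) + w * w ^ q * Zq * (hzw - hz)"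
        "d * z * (w ^ 2 * kzw - w * w ^ q * kz)"]
      norm_triangle_ineq[of "(a - 1 - c) * (w - w * w ^ q)" "w * w ^ q * Zq * (hzw - hz)"]
    by linarith
  also have "\<dots> = \<bar>\<epsilon>\<bar> * (\<alpha> * (2 * P) + P * C1 * \<beta> + 2 * pi * \<rho> * (2 * P * M))"
    by (simp add: algebra_simps)
  finally show ?thesis unfolding P_def[symmetric] norm_divide norm_of_real
    using e by (simp add: divide_le_eq mult.commute)
qed

lemma ev_small: "t > 0 \<Longrightarrow> eventually (\<lambda>\<epsilon>::real. \<epsilon> \<noteq> 0 \<and> \<bar>\<epsilon>\<bar> < t) (at 0)"
  by (auto simp: eventually_at intro!: exI[of _ t])

theorem lemma5:
  fixes p :: int and q :: nat and chi :: "complex \<Rightarrow> complex"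
    and z :: "real \<Rightarrow> complex" and K :: "complex set"
  assumes "q > 0" and "coprime p (int q)"
    and "chi_admissible p q chi"
    and "eventually (\<lambda>\<epsilon>. z \<epsilon> \<in> cyc p q chi (of_int p / of_nat q + of_real \<epsilon>)) (at 0)"
    and "compact K"
  shows "uniform_limit K
           (\<lambda>\<epsilon> w. (((\<lambda>u. Pol (of_int p / of_nat q + of_real \<epsilon>) (z \<epsilon> * u) / z \<epsilon>) ^^ q) w
                     - w - 2 * \<i> * pi * of_nat q * of_real \<epsilon> * w * (1 - w ^ q)) / of_real \<epsilon>)
           (\<lambda>w. 0) (at 0)"
proof -
  define c0 :: complex where "c0 = of_int p / of_nat q"
  define \<zeta> where "\<zeta> = exp (2 * pi * \<i> * c0)"
  define lam where "lam \<epsilon> = exp (2 * pi * \<i> * (c0 + of_real \<epsilon>))" for \<epsilon> :: real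
  have q1: "q \<ge> 1" using assms(1) by simp
  have c0r: "c0 = of_real (of_int p / real q)" by (simp add: c0_def)
  obtain H where Hc: "continuous_on UNIV H"
    and HF: "\<forall>u. ((\<lambda>u. \<zeta> * u + u ^ 2) ^^ q) u - u = u ^ (q + 1) * H u"
    using parabolic[OF assms(1,2)] unfolding \<zeta>_def c0_def by blast
  have zq: "\<zeta> ^ q = 1" using zeta_pow_q[OF assms(1)] unfolding \<zeta>_def c0_def .
  have decomp: "((\<lambda>u. l * u + u ^ 2) ^^ q) u = l ^ q * u + u ^ (q + 1) * H u + (l - \<zeta>) * u ^ 2 * KK q l \<zeta> u"
    for l u
  proof -
    have "u ^ 2 * GG q \<zeta> u = ((\<lambda>u. \<zeta> * u + u ^ 2) ^^ q) u - u"
      using iter_GG[where l=\<zeta> and n=q and u=u] zq by simp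
    also have "\<dots> = u ^ (q + 1) * H u" using HF by blast
    finally have a: "u ^ 2 * GG q \<zeta> u = u ^ (q + 1) * H u" .
    have b: "GG q l u = GG q \<zeta> u + (l - \<zeta>) * KK q l \<zeta> u"
      using KK_eq[where n=q and l=l and u=u and m=\<zeta>] by (simp add: algebra_simps)
    have "((\<lambda>u. l * u + u ^ 2) ^^ q) u = l ^ q * u + u ^ 2 * GG q l u" by (rule iter_GG)
    also have "\<dots> = l ^ q * u + u ^ 2 * GG q \<zeta> u + (l - \<zeta>) * u ^ 2 * KK q l \<zeta> u"
      unfolding b by (simp add: algebra_simps)
    finally show ?thesis unfolding a .
  qed
  obtain M0 where M0: "\<forall>l u. norm l \<le> 1 \<longrightarrow> norm u \<le> 1 \<longrightarrow> norm (KK q l \<zeta> u) \<le> M0"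
    using KK_bounded by blast
  define M where "M = max M0 1"
  have Mpos: "M > 0" unfolding M_def by simp
  have KM: "norm (KK q l \<zeta> u) \<le> M" if "norm l \<le> 1" "norm u \<le> 1" for l u
    using M0 that unfolding M_def by force
  have lam_eq: "lam \<epsilon> = exp (\<i> * of_real (2 * pi * (of_int p / real q + \<epsilon>)))" for \<epsilon>
    unfolding lam_def c0r by (simp add: algebra_simps)
  have lam_norm: "norm (lam \<epsilon>) = 1" for \<epsilon> unfolding lam_eq by simp
  have zeta_norm: "norm \<zeta> = 1"
    unfolding \<zeta>_def c0r using lam_norm[of 0, unfolded lam_def c0r] by simp
  have lam_diff: "norm (lam \<epsilon> - \<zeta>) \<le> 2 * pi * \<bar>\<epsilon>\<bar>" for \<epsilon>
  proof -
    have "lam \<epsilon> = \<zeta> * exp (\<i> * of_real (2 * pi * \<epsilon>))"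
      unfolding lam_def \<zeta>_def by (simp add: exp_add[symmetric] algebra_simps)
    then have "lam \<epsilon> - \<zeta> = \<zeta> * (exp (\<i> * of_real (2 * pi * \<epsilon>)) - 1)"
      by (simp add: algebra_simps)
    then have "norm (lam \<epsilon> - \<zeta>) = norm (exp (\<i> * of_real (2 * pi * \<epsilon>)) - 1)"
      using zeta_norm by (simp add: norm_mult)
    also have "\<dots> = 2 * \<bar>sin (2 * pi * \<epsilon> / 2)\<bar>" by (rule dist_exp_i_1)
    also have "\<dots> \<le> 2 * \<bar>2 * pi * \<epsilon> / 2\<bar>" using abs_sin_x_le_abs_x by simp
    also have "\<dots> = 2 * pi * \<bar>\<epsilon>\<bar>" by (simp add: abs_mult)
    finally show ?thesis .
  qed
  have lam_q: "lam \<epsilon> ^ q = exp (2 * \<i> * pi * of_nat q * of_real \<epsilon>)" for \<epsilon>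
  proof -
    have "lam \<epsilon> ^ q = exp (of_nat q * (2 * pi * \<i> * (c0 + of_real \<epsilon>)))"
      unfolding lam_def by (rule exp_of_nat_mult[symmetric])
    also have "of_nat q * (2 * pi * \<i> * (c0 + of_real \<epsilon>)) = (2 * of_int p * pi) * \<i> + 2 * \<i> * pi * of_nat q * of_real \<epsilon>"
      using assms(1) by (simp add: c0_def field_simps)
    also have "exp \<dots> = exp ((2 * of_int p * pi) * \<i>) * exp (2 * \<i> * pi * of_nat q * of_real \<epsilon>)"
      by (rule exp_add)
    also have "exp ((2 * of_int p * pi) * \<i>) = 1" by (rule exp_integer_2pi) simp
    finally show ?thesis by simp
  qed
  have Pol_eq: "Pol (of_int p / of_nat q + of_real \<epsilon>) = (\<lambda>u. lam \<epsilon> * u + u ^ 2)" for \<epsilon>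
    by (rule ext) (simp add: Pol_def lam_def c0_def)
  define r where "r = real q powr (- 3 / real q)"
  have r0: "r > 0" unfolding r_def using assms(1) by simp
  have adm: "chi analytic_on ball 0 r" "chi 0 = 0"
    "\<And>\<delta>. \<delta> \<in> ball 0 r \<Longrightarrow> \<delta> \<noteq> 0 \<Longrightarrow> chi \<delta> \<noteq> 0 \<and>
          is_cycle (Pol (of_int p / of_nat q + \<delta> ^ q)) q {chi (exp (2 * pi * \<i> * (of_int p / of_nat q)) ^ k * \<delta>) | k. k < q}"
    using assms(3) unfolding chi_admissible_def Let_def r_def by auto
  have "chi field_differentiable (at 0)"
    using analytic_on_imp_differentiable_at[OF adm(1)] r0 by simp
  from chi_lin[OF this adm(2)] obtain C d0 where Cd: "C > 0" "d0 > 0"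
    and Cb: "\<And>\<delta>. norm \<delta> < d0 \<Longrightarrow> norm (chi \<delta>) \<le> C * norm \<delta>" by blast
  define d where "d = min d0 r"
  have d0': "d > 0" unfolding d_def using Cd r0 by simp
  define C1 where "C1 = C ^ q"
  have C1pos: "C1 \<ge> 0" unfolding C1_def using Cd by simp
  define F where "F \<epsilon> = ((\<lambda>u. lam \<epsilon> * u + u ^ 2) ^^ q)" for \<epsilon>
  have dq: "d ^ q > 0" using d0' by simp
  have EV1: "eventually (\<lambda>\<epsilon>. \<epsilon> \<noteq> 0 \<and> z \<epsilon> \<noteq> 0 \<and> F \<epsilon> (z \<epsilon>) = z \<epsilon> \<and> norm (z \<epsilon>) ^ q \<le> C1 * \<bar>\<epsilon>\<bar>) (at 0)"
    using eventually_conj[OF assms(4) ev_small[OF dq]]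
  proof (elim eventually_mono)
    fix \<epsilon> :: real
    assume A: "z \<epsilon> \<in> cyc p q chi (of_int p / of_nat q + of_real \<epsilon>) \<and> \<epsilon> \<noteq> 0 \<and> \<bar>\<epsilon>\<bar> < d ^ q"
    then obtain \<delta> where \<delta>: "\<delta> ^ q = of_real \<epsilon>" and z\<delta>: "z \<epsilon> = chi \<delta>"
      unfolding cyc_def by auto
    have nd: "norm \<delta> ^ q = \<bar>\<epsilon>\<bar>" using arg_cong[OF \<delta>, of norm] by (simp add: norm_power)
    have "norm \<delta> ^ q < d ^ q" using A nd by simp
    then have "norm \<delta> < d" by (rule power_less_imp_less_base) (use d0' in simp)
    then have dr: "\<delta> \<in> ball 0 r" and dd0: "norm \<delta> < d0" unfolding d_def by auto
    have "\<delta> \<noteq> 0"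
    proof
      assume h0: "\<delta> = 0"
      have "(of_real \<epsilon> :: complex) = \<delta> ^ q" using \<delta> by simp
      also have "\<dots> = 0" using h0 assms(1) by simp
      finally show False using A by simp
    qed
    from adm(3)[OF dr this] have nz: "chi \<delta> \<noteq> 0"
      and cyc: "is_cycle (Pol (of_int p / of_nat q + \<delta> ^ q)) q {chi (exp (2 * pi * \<i> * (of_int p / of_nat q)) ^ k * \<delta>) | k. k < q}"
      by auto
    have mem: "chi \<delta> \<in> {chi (exp (2 * pi * \<i> * (of_int p / of_nat q)) ^ k * \<delta>) | k. k < q}"
      using assms(1) by (auto intro!: exI[of _ 0])
    have fixpt: "F \<epsilon> (z \<epsilon>) = z \<epsilon>"
      using cycle_fixed[OF cyc mem] unfolding \<delta> Pol_eq F_def z\<delta> .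
    have "norm (z \<epsilon>) ^ q \<le> (C * norm \<delta>) ^ q"
      unfolding z\<delta> using Cb[OF dd0] by (intro power_mono) auto
    also have "\<dots> = C1 * \<bar>\<epsilon>\<bar>" unfolding C1_def power_mult_distrib nd ..
    finally show "\<epsilon> \<noteq> 0 \<and> z \<epsilon> \<noteq> 0 \<and> F \<epsilon> (z \<epsilon>) = z \<epsilon> \<and> norm (z \<epsilon>) ^ q \<le> C1 * \<bar>\<epsilon>\<bar>"
      using A nz fixpt z\<delta> by simp
  qed
  obtain R0 where R0: "\<forall>w\<in>K. norm w \<le> R0"
    using compact_imp_bounded[OF assms(5)] unfolding bounded_iff by blast
  define R where "R = max R0 1"
  have R1: "R \<ge> 1" and RK: "\<And>w. w \<in> K \<Longrightarrow> norm w \<le> R" using R0 unfolding R_def by force+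
  define P where "P = R ^ (q + 1)"
  have P1: "P \<ge> 1" unfolding P_def by (rule one_le_power[OF R1])
  show ?thesis
  proof (rule uniform_limitI)
    fix e :: real assume e: "e > 0"
    define cq where "cq = 2 * pi * real q"
    have cq0: "cq \<ge> 0" unfolding cq_def by simp
    define \<eta>1 where "\<eta>1 = e / (8 * P * (cq + 1))"
    have \<eta>1: "\<eta>1 > 0" unfolding \<eta>1_def using e P1 cq0 by simp
    obtain dE where dE: "dE > 0" and dEb: "\<forall>h::complex. norm h < dE \<longrightarrow> norm (exp h - 1 - h) \<le> \<eta>1 * norm h"
      using exp_small[OF \<eta>1] by blast
    define \<beta>0 where "\<beta>0 = e / (8 * P * (C1 + 1))"
    have \<beta>0: "\<beta>0 > 0" unfolding \<beta>0_def using e P1 C1pos by simp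
    obtain dH where dH: "dH > 0" and dHb: "\<forall>u. dist u 0 < dH \<longrightarrow> dist (H u) (H 0) < \<beta>0"
      using Hc \<beta>0 unfolding continuous_on_iff by blast
    define \<rho> where "\<rho> = min (min (dH / R) (1 / R)) (e / (16 * pi * P * M))"
    have \<rho>0: "\<rho> > 0" unfolding \<rho>_def using dH R1 e P1 Mpos by simp
    have EV2: "eventually (\<lambda>\<epsilon>::real. \<epsilon> \<noteq> 0 \<and> \<bar>\<epsilon>\<bar> < \<rho> ^ q / (C1 + 1)) (at 0)"
      using \<rho>0 C1pos by (intro ev_small) simp
    have EV3: "eventually (\<lambda>\<epsilon>::real. \<epsilon> \<noteq> 0 \<and> \<bar>\<epsilon>\<bar> < dE / (cq + 1)) (at 0)"
      using dE cq0 by (intro ev_small) simp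
    show "\<forall>\<^sub>F \<epsilon> in at 0. \<forall>w\<in>K. dist ((((\<lambda>u. Pol (of_int p / of_nat q + of_real \<epsilon>) (z \<epsilon> * u) / z \<epsilon>) ^^ q) w
                     - w - 2 * \<i> * pi * of_nat q * of_real \<epsilon> * w * (1 - w ^ q)) / of_real \<epsilon>) 0 < e"
      using eventually_conj[OF EV1 eventually_conj[OF EV2 EV3]]
    proof (elim eventually_mono, intro ballI)
      fix \<epsilon> :: real and w :: complex
      assume A: "(\<epsilon> \<noteq> 0 \<and> z \<epsilon> \<noteq> 0 \<and> F \<epsilon> (z \<epsilon>) = z \<epsilon> \<and> norm (z \<epsilon>) ^ q \<le> C1 * \<bar>\<epsilon>\<bar>) \<and>
          (\<epsilon> \<noteq> 0 \<and> \<bar>\<epsilon>\<bar> < \<rho> ^ q / (C1 + 1)) \<and> (\<epsilon> \<noteq> 0 \<and> \<bar>\<epsilon>\<bar> < dE / (cq + 1))"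
      assume wK: "w \<in> K"
      define zz where "zz = z \<epsilon>"
      define l where "l = lam \<epsilon>"
      define c where "c = 2 * \<i> * pi * of_nat q * of_real \<epsilon>"
      have e0: "\<epsilon> \<noteq> 0" and zz0: "zz \<noteq> 0" and fixp: "F \<epsilon> zz = zz" and zzq: "norm zz ^ q \<le> C1 * \<bar>\<epsilon>\<bar>"
        using A unfolding zz_def by auto
      have wR: "norm w \<le> R" using RK[OF wK] .
      have "norm zz ^ q < \<rho> ^ q"
      proof -
        have "C1 * \<bar>\<epsilon>\<bar> \<le> (C1 + 1) * \<bar>\<epsilon>\<bar>" by (simp add: mult_right_mono)
        also have "\<dots> < \<rho> ^ q" using A C1pos by (simp add: field_simps)
        finally show ?thesis using zzq by linarith
      qed
      then have zr: "norm zz < \<rho>" by (rule power_less_imp_less_base) (use \<rho>0 in simp)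
      have zzw1: "norm zz * norm w \<le> norm zz * R" by (rule mult_left_mono[OF wR]) simp
      have zzw2: "norm zz * R < \<rho> * R" using zr R1 by simp
      have zzw: "norm (zz * w) < \<rho> * R" unfolding norm_mult using zzw1 zzw2 by linarith
      have "\<rho> \<le> 1 / R" unfolding \<rho>_def by simp
      then have \<rho>R1: "\<rho> * R \<le> 1" using R1 by (simp add: le_divide_eq)
      have "\<rho> \<le> dH / R" unfolding \<rho>_def by simp
      then have \<rho>RH: "\<rho> * R \<le> dH" using R1 by (simp add: le_divide_eq)
      have \<rho>\<rho>R: "\<rho> \<le> \<rho> * R" using R1 \<rho>0 by simp
      have \<rho>1: "\<rho> \<le> 1" and \<rho>H: "\<rho> \<le> dH" using \<rho>R1 \<rho>RH \<rho>\<rho>R by linarith+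
      have Q: "((\<lambda>u. Pol (of_int p / of_nat q + of_real \<epsilon>) (z \<epsilon> * u) / z \<epsilon>) ^^ q) w = F \<epsilon> (zz * w) / zz"
        unfolding Pol_eq F_def zz_def using zz0 unfolding zz_def by (rule conj_iter)
      have F1: "F \<epsilon> (zz * w) = l ^ q * (zz * w) + zz * zz ^ q * (w * w ^ q) * H (zz * w)
                 + (l - \<zeta>) * (zz ^ 2 * w ^ 2) * KK q l \<zeta> (zz * w)"
        unfolding F_def l_def decomp by (simp add: power_mult_distrib mult_ac)
      have F2: "zz = l ^ q * zz + zz * zz ^ q * H zz + (l - \<zeta>) * zz ^ 2 * KK q l \<zeta> zz"
        using fixp unfolding F_def l_def decomp by (simp add: mult_ac)
      have id: "F \<epsilon> (zz * w) / zz - w - c * w * (1 - w ^ q) =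
          (l ^ q - 1 - c) * (w - w * w ^ q) + w * w ^ q * zz ^ q * (H (zz * w) - H zz)
            + (l - \<zeta>) * zz * (w ^ 2 * KK q l \<zeta> (zz * w) - w * w ^ q * KK q l \<zeta> zz)"
        by (rule alg_id[OF zz0 F1 F2])
      have nc: "norm c = cq * \<bar>\<epsilon>\<bar>" unfolding c_def cq_def by (simp add: norm_mult)
      have "\<bar>\<epsilon>\<bar> + cq * \<bar>\<epsilon>\<bar> < dE" using A cq0 by (simp add: field_simps)
      then have "norm c < dE" unfolding nc using abs_ge_zero[of \<epsilon>] by linarith
      then have "norm (exp c - 1 - c) \<le> \<eta>1 * norm c" using dEb by blast
      then have Ab: "norm (l ^ q - 1 - c) \<le> (\<eta>1 * cq) * \<bar>\<epsilon>\<bar>"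
        unfolding l_def lam_q c_def[symmetric] nc by (simp add: mult_ac)
      have Zb: "norm (zz ^ q) \<le> C1 * \<bar>\<epsilon>\<bar>" using zzq by (simp add: norm_power)
      have Hb: "norm (H (zz * w) - H zz) \<le> 2 * \<beta>0"
      proof -
        have "dist (H (zz * w)) (H 0) < \<beta>0" using dHb zzw \<rho>RH by simp
        moreover have "dist (H zz) (H 0) < \<beta>0" using dHb zr \<rho>H by simp
        ultimately show ?thesis using dist_triangle2[of "H (zz * w)" "H zz" "H 0"]
          by (simp add: dist_norm)
      qed
      have Db: "norm (l - \<zeta>) \<le> 2 * pi * \<bar>\<epsilon>\<bar>" unfolding l_def by (rule lam_diff)
      have nl: "norm l \<le> 1" unfolding l_def using lam_norm by simp
      have K1: "norm (KK q l \<zeta> (zz * w)) \<le> M" using KM nl zzw \<rho>R1 by simp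
      have K2: "norm (KK q l \<zeta> zz) \<le> M" using KM nl zr \<rho>1 by simp
      have bound: "norm ((F \<epsilon> (zz * w) / zz - w - c * w * (1 - w ^ q)) / of_real \<epsilon>)
          \<le> (\<eta>1 * cq) * (2 * R ^ (q + 1)) + R ^ (q + 1) * C1 * (2 * \<beta>0) + 2 * pi * \<rho> * (2 * R ^ (q + 1) * M)"
        unfolding id
        by (rule norm_bound[OF wR R1 q1 e0 Ab Zb Hb Db K1 K2 _ _ C1pos]) (use zr \<eta>1 cq0 Mpos in auto)
      have t1: "(\<eta>1 * cq) * (2 * P) \<le> e / 4"
      proof -
        have "(\<eta>1 * cq) * (2 * P) = (e / 4) * (cq / (cq + 1))"
          unfolding \<eta>1_def using P1 cq0 by (simp add: divide_simps; simp add: algebra_simps)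
        moreover have "cq / (cq + 1) \<le> 1" using cq0 by simp
        moreover have "(e / 4) * (cq / (cq + 1)) \<le> e / 4" by (rule mult_left_le) (use calculation e in auto)
        ultimately show ?thesis by linarith
      qed
      have t2: "P * C1 * (2 * \<beta>0) < e / 2"
      proof -
        have "P * C1 * (2 * \<beta>0) = (e / 4) * (C1 / (C1 + 1))"
          unfolding \<beta>0_def using P1 C1pos by (simp add: divide_simps; simp add: algebra_simps)
        moreover have "C1 / (C1 + 1) \<le> 1" using C1pos by simp
        moreover have "(e / 4) * (C1 / (C1 + 1)) \<le> e / 4" by (rule mult_left_le) (use calculation e in auto)
        ultimately have "P * C1 * (2 * \<beta>0) \<le> e / 4" by linarith
        then show ?thesis using e by simp
      qed
      have t3: "2 * pi * \<rho> * (2 * P * M) \<le> e / 4"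
      proof -
        have "\<rho> \<le> e / (16 * pi * P * M)" unfolding \<rho>_def by simp
        then have "\<rho> * (16 * pi * P * M) \<le> e" using P1 Mpos by (simp add: field_simps)
        then show ?thesis by (simp add: algebra_simps)
      qed
      show "dist ((((\<lambda>u. Pol (of_int p / of_nat q + of_real \<epsilon>) (z \<epsilon> * u) / z \<epsilon>) ^^ q) w
                     - w - 2 * \<i> * pi * of_nat q * of_real \<epsilon> * w * (1 - w ^ q)) / of_real \<epsilon>) 0 < e"
        using bound t1 t2 t3 unfolding Q c_def[symmetric] P_def dist_norm diff_zero by linarith
    qed
  qed
qed

end
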